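(* Let $v$ be an aperiodic infinite word over $\{0,1\}$ such that $\Phi_{\mathbb{R}}(v)$ exists. Then for all but finitely many $\ell\ge1$, if $u$ denotes the prefix of $v$ of length $\ell$, the series $\Phi_{\mathbb{R}}(u^\infty)$ of the purely periodic word $u^\infty=uuu\cdots$ converges and $$\Phi_{\mathbb{R}}(u^\infty)=C_{\mathbb{R}}(u).$$
   Context: For an infinite $0$-$1$ word $w$ with $1$'s at positions $d_0<d_1<\cdots$, $\Phi_{\mathbb{R}}(w)=-\sum_{i\ge0}2^{d_i}/3^{i+1}$, said to exist if the series converges in $\mathbb{R}$. For a finite word $u$ of length $\ell\ge1$ and height $h$ with $1$'s at positions $d_0<\dots<d_{h-1}$, $\varphi(u)=\sum_{i=0}^{h-1}3^{h-1-i}2^{d_i}$ and $C_{\mathbb{R}}(u)=\varphi(u)/(2^\ell-3^h)$. *)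

theory Defs
  imports Complex_Main "HOL-Library.Infinite_Set"
begin

text \<open>Infinite 0-1 words are functions nat => bool (True = letter 1);
finite words are bool lists.\<close>

definition ones :: "(nat \<Rightarrow> bool) \<Rightarrow> nat set" where
  "ones w = {n. w n}"

text \<open>Position of the i-th letter 1 (d_i), counted from 0.\<close>
definition dpos :: "(nat \<Rightarrow> bool) \<Rightarrow> nat \<Rightarrow> nat" where
  "dpos w i = enumerate (ones w) i"

definition Phi_R_has :: "(nat \<Rightarrow> bool) \<Rightarrow> real \<Rightarrow> bool" where
  "Phi_R_has w x \<longleftrightarrow>
     (infinite (ones w) \<and> ((\<lambda>i. 2 ^ dpos w i / 3 ^ (i + 1)) sums (- x))) \<or>
     (finite (ones w) \<and> x = - (\<Sum>i<card (ones w). 2 ^ dpos w i / 3 ^ (i + 1)))"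

definition Phi_R_exists :: "(nat \<Rightarrow> bool) \<Rightarrow> bool" where
  "Phi_R_exists w \<longleftrightarrow> (\<exists>x. Phi_R_has w x)"

definition Phi_R :: "(nat \<Rightarrow> bool) \<Rightarrow> real" where
  "Phi_R w = (THE x. Phi_R_has w x)"

definition fones :: "bool list \<Rightarrow> nat set" where
  "fones u = {k. k < length u \<and> u ! k}"

definition height :: "bool list \<Rightarrow> nat" where
  "height u = card (fones u)"

definition fphi :: "bool list \<Rightarrow> nat" where
  "fphi u = (\<Sum>i<height u. 3 ^ (height u - 1 - i) * 2 ^ enumerate (fones u) i)"

definition C_R :: "bool list \<Rightarrow> real" where
  "C_R u = real (fphi u) / (2 ^ length u - 3 ^ height u)"

definition prefix_word :: "(nat \<Rightarrow> bool) \<Rightarrow> nat \<Rightarrow> bool list" where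
  "prefix_word v l = map v [0..<l]"

definition pow_inf :: "bool list \<Rightarrow> nat \<Rightarrow> bool" where
  "pow_inf u = (\<lambda>n. u ! (n mod length u))"

text \<open>Aperiodic = not ultimately periodic.\<close>
definition ult_periodic :: "(nat \<Rightarrow> bool) \<Rightarrow> bool" where
  "ult_periodic v \<longleftrightarrow> (\<exists>p>0. \<exists>N. \<forall>n\<ge>N. v (n + p) = v n)"

end

theory Submission imports Defs begin
lemma enum_strict_mono:
  fixes f :: "nat \<Rightarrow> nat"
  assumes sm: "strict_mono f"
  shows "enumerate (range f) n = f n"
proof -
  have inf: "infinite (range f)"
    using sm strict_mono_imp_inj_on finite_imageD infinite_UNIV_nat by blast
  show ?thesis
  proof (induction n)
    case 0
    show ?case unfolding enumerate_0
      by (rule Least_equality) (auto simp: sm strict_mono_less_eq)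
  next
    case (Suc n)
    show ?case unfolding enumerate_Suc''[OF inf] Suc
    proof (rule Least_equality)
      show "f (Suc n) \<in> range f \<and> f n < f (Suc n)" using sm by (auto simp: strict_mono_def)
    next
      fix y assume "y \<in> range f \<and> f n < y"
      then obtain m where "y = f m" "f n < f m" by auto
      then have "n < m" using sm strict_mono_less by blast
      then show "f (Suc n) \<le> y" using \<open>y = f m\<close> by (simp add: strict_mono_less_eq[OF sm])
    qed
  qed
qed

lemma sum_split_add:
  "(\<Sum>k<n + m. g k) = (\<Sum>k<n. g k) + (\<Sum>i<m. g (n + i))" for g :: "nat \<Rightarrow> real"
  by (induction m) auto

lemma periodic_main:
  fixes u :: "bool list"
  assumes lpos: "length u > 0" and hpos: "height u > 0"
    and rlt: "(2::real) ^ length u < 3 ^ height u"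
  shows "Phi_R_has (pow_inf u) (C_R u)"
proof -
  define l where "l = length u"
  define h where "h = height u"
  define F where "F = fones u"
  define e where "e = enumerate F"
  have finF: "finite F" unfolding F_def fones_def by auto
  have cardF: "card F = h" unfolding h_def height_def F_def ..
  have eF: "e i \<in> F" if "i < h" for i
    using finite_enumerate_in_set[OF finF] that cardF e_def by auto
  have el: "e i < l" "u ! e i" if "i < h" for i
    using eF[OF that] unfolding F_def fones_def l_def by auto
  have emono: "e i < e j" if "i < j" "j < h" for i j
    using finite_enumerate_mono[OF that(1) finF] that cardF e_def by auto
  have h0: "h > 0" "l > 0" using lpos hpos h_def l_def by auto
  define f where "f n = (n div h) * l + e (n mod h)" for n
  have fqi: "f (q * h + i) = q * l + e i" if "i < h" for q i
    using that h0 by (simp add: f_def)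
  have sm: "strict_mono f"
    unfolding strict_mono_Suc_iff
  proof
    fix n
    show "f n < f (Suc n)"
    proof (cases "Suc (n mod h) < h")
      case True
      then have "Suc n mod h = Suc (n mod h)" "Suc n div h = n div h"
        using h0 by (auto simp: mod_Suc div_Suc)
      then show ?thesis unfolding f_def using emono[OF _ True] by simp
    next
      case False
      moreover have "n mod h < h" using h0 by simp
      ultimately have "Suc (n mod h) = h" by simp
      then have "Suc n mod h = 0" "Suc n div h = Suc (n div h)"
        using h0 by (auto simp: mod_Suc div_Suc)
      moreover have "e (n mod h) < l" using el h0 by simp
      ultimately show ?thesis unfolding f_def by simp
    qed
  qed
  have ones_eq: "ones (pow_inf u) = range f"
  proof
    show "ones (pow_inf u) \<subseteq> range f"
    proof
      fix n assume "n \<in> ones (pow_inf u)"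
      then have "u ! (n mod l)" unfolding ones_def pow_inf_def l_def by simp
      then have "n mod l \<in> F" unfolding F_def fones_def l_def using h0 l_def by simp
      then obtain i where i: "i < h" "e i = n mod l"
        using finite_enumerate_Ex[OF finF] cardF e_def by metis
      have "n = (n div l) * l + e i" using i by simp
      also have "\<dots> = f ((n div l) * h + i)" using fqi i by simp
      finally show "n \<in> range f" by blast
    qed
  next
    show "range f \<subseteq> ones (pow_inf u)"
    proof
      fix x assume "x \<in> range f"
      then obtain n where x: "x = f n" by auto
      have "n mod h < h" using h0 by simp
      then have "x mod l = e (n mod h)" "u ! e (n mod h)" using el x by (auto simp: f_def)
      then show "x \<in> ones (pow_inf u)" unfolding ones_def pow_inf_def l_def by simp
    qed
  qed
  have inf: "infinite (ones (pow_inf u))"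
    unfolding ones_eq using sm strict_mono_imp_inj_on finite_imageD infinite_UNIV_nat by blast
  have dp: "dpos (pow_inf u) n = f n" for n
    unfolding dpos_def ones_eq by (rule enum_strict_mono[OF sm])
  define t where "t n = (2::real) ^ f n / 3 ^ (n + 1)" for n
  define r where "r = (2::real) ^ l / 3 ^ h"
  define a where "a i = (2::real) ^ e i / 3 ^ (i + 1)" for i
  define A where "A = (\<Sum>i<h. a i)"
  have r01: "0 \<le> r" "r < 1" using rlt unfolding r_def l_def h_def by auto
  have tji: "t (j * h + i) = r ^ j * a i" if "i < h" for j i
  proof -
    have "t (j * h + i) = 2 ^ (j * l + e i) / 3 ^ (j * h + i + 1)"
      unfolding t_def fqi[OF that] ..
    also have "\<dots> = ((2::real) ^ l) ^ j * 2 ^ e i / (((3::real) ^ h) ^ j * 3 ^ (i + 1))"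
      by (simp add: power_add flip: power_mult) (simp add: power_mult mult_ac)
    also have "\<dots> = r ^ j * a i" unfolding r_def a_def by (simp add: power_divide)
    finally show ?thesis .
  qed
  have part: "(\<Sum>n<q * h. t n) = (\<Sum>j<q. r ^ j * A)" for q
  proof (induction q)
    case 0 then show ?case by simp
  next
    case (Suc q)
    have "(\<Sum>n<Suc q * h. t n) = (\<Sum>n<q * h + h. t n)" by (simp add: add.commute)
    also have "\<dots> = (\<Sum>n<q * h. t n) + (\<Sum>i<h. t (q * h + i))" by (rule sum_split_add)
    also have "(\<Sum>i<h. t (q * h + i)) = (\<Sum>i<h. r ^ q * a i)"
      by (rule sum.cong) (auto simp: tji)
    also have "\<dots> = r ^ q * A" unfolding A_def by (simp add: sum_distrib_left)
    finally show ?case using Suc by simp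
  qed
  have tnn: "0 \<le> t n" for n unfolding t_def by simp
  have Ann: "0 \<le> A" unfolding A_def a_def by (auto intro: sum_nonneg)
  have geo: "(\<lambda>j. r ^ j * A) sums (A / (1 - r))"
    using geometric_sums[of r] r01 sums_mult2[of "\<lambda>j. r^j" "1/(1-r)" A] by auto
  have bnd: "(\<Sum>n<N. t n) \<le> A / (1 - r)" for N
  proof -
    have "(\<Sum>n<N. t n) \<le> (\<Sum>n<N * h. t n)"
      using h0 tnn by (intro sum_mono2) auto
    also have "\<dots> = (\<Sum>j<N. r ^ j * A)" by (rule part)
    also have "\<dots> \<le> A / (1 - r)"
      using sum_le_suminf[OF sums_summable[OF geo], of "{..<N}"] sums_unique[OF geo] r01 Ann by auto
    finally show ?thesis .
  qed
  have summ: "summable t" by (rule summableI_nonneg_bounded[OF tnn bnd])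
  have L1: "(\<lambda>N. \<Sum>n<N. t n) \<longlonglongrightarrow> suminf t" using summ summable_LIMSEQ by blast
  have smh: "strict_mono (\<lambda>q. q * h)" using h0 by (auto simp: strict_mono_def)
  have L2: "(\<lambda>q. \<Sum>n<q * h. t n) \<longlonglongrightarrow> suminf t"
    using LIMSEQ_subseq_LIMSEQ[OF L1 smh] by (simp add: o_def)
  have L3: "(\<lambda>q. \<Sum>n<q * h. t n) \<longlonglongrightarrow> A / (1 - r)"
    unfolding part using geo by (simp add: sums_def)
  have sumv: "suminf t = A / (1 - r)" using LIMSEQ_unique[OF L2 L3] .
  have tsums: "t sums (A / (1 - r))" using summ sumv summable_sums by fastforce
  have fphiA: "real (fphi u) = 3 ^ h * A"
  proof -
    have "real (fphi u) = (\<Sum>i<h. 3 ^ (h - 1 - i) * 2 ^ e i)"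
      unfolding fphi_def h_def[symmetric] e_def F_def by simp
    also have "\<dots> = (\<Sum>i<h. 3 ^ h * a i)"
    proof (rule sum.cong)
      fix i assume "i \<in> {..<h}"
      then have hi: "h = (h - 1 - i) + (i + 1)" by auto
      have "(3::real) ^ h = 3 ^ (h - 1 - i) * 3 ^ (i + 1)" by (subst hi, simp only: power_add)
      then show "(3::real) ^ (h - 1 - i) * 2 ^ e i = 3 ^ h * a i" unfolding a_def by simp
    qed simp
    finally show ?thesis unfolding A_def by (simp add: sum_distrib_left)
  qed
  have val: "A / (1 - r) = - C_R u"
  proof -
    have d: "(3::real) ^ h - 2 ^ l > 0" using rlt h_def l_def by simp
    have "A / (1 - r) = 3 ^ h * A / (3 ^ h - 2 ^ l)"
      unfolding r_def using d by (simp add: field_simps)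
    also have "\<dots> = - C_R u" unfolding C_R_def fphiA l_def[symmetric] h_def[symmetric]
      using d by (simp add: field_simps)
    finally show ?thesis .
  qed
  have "(\<lambda>i. 2 ^ dpos (pow_inf u) i / 3 ^ (i + 1)) sums (- C_R u)"
    using tsums unfolding val dp t_def .
  then show ?thesis unfolding Phi_R_has_def using inf by blast
qed

theorem lemma35:
  fixes v :: "nat \<Rightarrow> bool"
  assumes "\<not> ult_periodic v"
    and "Phi_R_exists v"
  shows "\<forall>\<^sub>F l in sequentially.
           Phi_R_has (pow_inf (prefix_word v l)) (C_R (prefix_word v l))"
proof -
  define S where "S = ones v"
  define d where "d = dpos v"
  have inf: "infinite S"
  proof
    assume fin: "finite S"
    then obtain N where N: "\<forall>s\<in>S. s < N" using finite_nat_bounded[OF fin] by (auto simp: lessThan_def subset_eq)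
    have "\<forall>n\<ge>N. v (n + 1) = v n"
    proof (intro allI impI)
      fix n assume "N \<le> n"
      then have "\<not> v n" "\<not> v (n + 1)" using N unfolding S_def ones_def by force+
      then show "v (n + 1) = v n" by simp
    qed
    then have "ult_periodic v" unfolding ult_periodic_def by (intro exI[of _ 1]) auto
    then show False using assms(1) by simp
  qed
  obtain x where "Phi_R_has v x" using assms(2) unfolding Phi_R_exists_def by blast
  then have "(\<lambda>i. 2 ^ d i / 3 ^ (i + 1)) sums (- x)"
    using inf unfolding Phi_R_has_def S_def d_def by blast
  then have "(\<lambda>i. (2::real) ^ d i / 3 ^ (i + 1)) \<longlonglongrightarrow> 0"
    using summable_LIMSEQ_zero sums_summable by blast
  then have "\<forall>\<^sub>F i in sequentially. (2::real) ^ d i / 3 ^ (i + 1) < 1 / 3"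
    by (rule order_tendstoD) simp
  then obtain I where I: "\<And>i. i \<ge> I \<Longrightarrow> (2::real) ^ d i / 3 ^ (i + 1) < 1 / 3"
    unfolding eventually_sequentially by blast
  have I': "(2::real) ^ d i < 3 ^ i" if "i \<ge> I" for i
    using I[OF that] by (simp add: field_simps)
  show ?thesis
  proof (rule eventually_sequentiallyI[of "Suc (d I)"])
    fix l assume l: "Suc (d I) \<le> l"
    define u where "u = prefix_word v l"
    have lu: "length u = l" unfolding u_def prefix_word_def by simp
    have fu: "fones u = {k. k < l \<and> v k}" unfolding u_def prefix_word_def fones_def by auto
    have key: "m < height u" if "d m < l" for m
    proof -
      have sub: "enumerate S ` {..m} \<subseteq> fones u"
      proof
        fix y assume "y \<in> enumerate S ` {..m}"
        then obtain k where k: "k \<le> m" "y = enumerate S k" by auto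
        then have "y \<le> d m" using inf unfolding d_def dpos_def S_def by simp
        moreover have "y \<in> S" using k enumerate_in_set[OF inf] by simp
        ultimately show "y \<in> fones u" using that unfolding fu S_def ones_def by auto
      qed
      have "card (enumerate S ` {..m}) = Suc m"
        using inj_enumerate[OF inf] by (simp add: card_image inj_on_subset)
      moreover have "card (enumerate S ` {..m}) \<le> height u"
        unfolding height_def by (rule card_mono[OF _ sub]) (simp add: fu)
      ultimately show ?thesis by simp
    qed
    define h where "h = height u"
    have "I < h" using key l h_def by simp
    have "\<not> d h < l" using key h_def by blast
    then have "(2::real) ^ l \<le> 2 ^ d h" by simp
    also have "\<dots> < 3 ^ h" using I' \<open>I < h\<close> by simp
    finally have "(2::real) ^ length u < 3 ^ height u" using lu h_def by simp
    moreover have "length u > 0" "height u > 0" using lu l \<open>I < h\<close> h_def by auto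
    ultimately show "Phi_R_has (pow_inf (prefix_word v l)) (C_R (prefix_word v l))"
      using periodic_main u_def by blast
  qed
qed

end
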